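(* There is a universal constant $c$ such that for all $d\ge2$, $n\ge1$ and every $n$-qudit unitary $U$, $$M[U]\le c\,[\log n+\log d]\,(\mathrm{CiS}[U]+1).$$
   Context: Let $V=\mathbb{Z}_d\times\mathbb{Z}_d$; for $a=(s,t)\in V$, $P_a=X^sZ^t$ with $X|j\rangle=|j+1\bmod d\rangle$, $Z|j\rangle=e^{2\pi ij/d}|j\rangle$; $P_{\vec a}=\bigotimes_iP_{a_i}$, $|\vec a|=\#\{i:a_i\ne(0,0)\}$; weight-1 Paulis are $P_{\vec a}$ with $|\vec a|=1$. $\|A\|_2=(d^{-n}\mathrm{Tr}(A^\dagger A))^{1/2}$. For $\|O\|_2=1$, $P_O[\vec a]=d^{-2n}|\mathrm{Tr}(OP_{\vec a})|^2$, $H[O]=-\sum_{\vec a}P_O[\vec a]\log P_O[\vec a]$ (log base 2), $I[O]=\sum_{\vec a}|\vec a|P_O[\vec a]$. Magic entropy: $M[U]=\max_{O\text{ weight-1 Pauli}}H[UOU^\dagger]$. Circuit sensitivity: $\mathrm{CiS}[U]=\max_{\|O\|_2=1}|I[UOU^\dagger]-I[O]|$. *)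

theory Defs
  imports Complex_Main "Jordan_Normal_Form.Matrix"
begin

definition mtrace :: "complex mat \<Rightarrow> complex" where
  "mtrace A = (\<Sum>i<dim_row A. A $$ (i,i))"

definition adj :: "complex mat \<Rightarrow> complex mat" where
  "adj A = mat (dim_col A) (dim_row A) (\<lambda>(i,j). cnj (A $$ (j,i)))"

definition kron :: "complex mat \<Rightarrow> complex mat \<Rightarrow> complex mat" where
  "kron A B = mat (dim_row A * dim_row B) (dim_col A * dim_col B)
     (\<lambda>(i,j). A $$ (i div dim_row B, j div dim_col B) * B $$ (i mod dim_row B, j mod dim_col B))"

definition unitary_mat :: "nat \<Rightarrow> complex mat \<Rightarrow> bool" where
  "unitary_mat N U \<longleftrightarrow> U \<in> carrier_mat N N \<and> U * adj U = 1\<^sub>m N"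

definition shiftX :: "nat \<Rightarrow> complex mat" where
  "shiftX d = mat d d (\<lambda>(j,k). if j = (k + 1) mod d then 1 else 0)"

definition clockZ :: "nat \<Rightarrow> complex mat" where
  "clockZ d = mat d d (\<lambda>(j,k). if j = k then exp (2 * pi * \<i> * of_nat j / of_nat d) else 0)"

definition pauli1 :: "nat \<Rightarrow> nat \<times> nat \<Rightarrow> complex mat" where
  "pauli1 d a = (shiftX d ^\<^sub>m fst a) * (clockZ d ^\<^sub>m snd a)"

text \<open>V^n, with V = Z_d x Z_d represented by {0..<d} x {0..<d}.\<close>
definition pauli_vecs :: "nat \<Rightarrow> nat \<Rightarrow> (nat \<times> nat) list set" where
  "pauli_vecs d n = {as. length as = n \<and> set as \<subseteq> {0..<d} \<times> {0..<d}}"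

definition pauli :: "nat \<Rightarrow> (nat \<times> nat) list \<Rightarrow> complex mat" where
  "pauli d as = foldr (\<lambda>a M. kron (pauli1 d a) M) as (1\<^sub>m 1)"

text \<open>Weight |a| = number of non-identity tensor factors.\<close>
definition pweight :: "(nat \<times> nat) list \<Rightarrow> nat" where
  "pweight as = length (filter (\<lambda>a. a \<noteq> (0,0)) as)"

definition norm2 :: "nat \<Rightarrow> nat \<Rightarrow> complex mat \<Rightarrow> real" where
  "norm2 d n A = sqrt (Re (mtrace (adj A * A)) / real d ^ n)"

definition pauli_prob :: "nat \<Rightarrow> nat \<Rightarrow> complex mat \<Rightarrow> (nat \<times> nat) list \<Rightarrow> real" where
  "pauli_prob d n Ob as = (cmod (mtrace (Ob * pauli d as)))\<^sup>2 / real d ^ (2 * n)"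

definition pauli_entropy :: "nat \<Rightarrow> nat \<Rightarrow> complex mat \<Rightarrow> real" where
  "pauli_entropy d n Ob =
     - (\<Sum>as\<in>pauli_vecs d n. let p = pauli_prob d n Ob as in
          if p = 0 then 0 else p * log 2 p)"

definition influence :: "nat \<Rightarrow> nat \<Rightarrow> complex mat \<Rightarrow> real" where
  "influence d n Ob = (\<Sum>as\<in>pauli_vecs d n. real (pweight as) * pauli_prob d n Ob as)"

definition magic_entropy :: "nat \<Rightarrow> nat \<Rightarrow> complex mat \<Rightarrow> real" where
  "magic_entropy d n U =
     Max ((\<lambda>as. pauli_entropy d n (U * pauli d as * adj U)) `
          {as \<in> pauli_vecs d n. pweight as = 1})"

definition circuit_sensitivity :: "nat \<Rightarrow> nat \<Rightarrow> complex mat \<Rightarrow> real" where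
  "circuit_sensitivity d n U =
     Sup ((\<lambda>Ob. \<bar>influence d n (U * Ob * adj U) - influence d n Ob\<bar>) `
          {Ob \<in> carrier_mat (d ^ n) (d ^ n). norm2 d n Ob = 1})"

end

theory Submission imports Defs "Jordan_Normal_Form.Determinant" begin

lemma mult_entry:
  assumes "i < dim_row A" "j < dim_col B" "dim_col A = dim_row B"
  shows "(A * B) $$ (i,j) = (\<Sum>l<dim_col A. A $$ (i,l) * B $$ (l,j))"
  using assms by (simp add: scalar_prod_def atLeast0LessThan)

lemma sum_mult_index:
  fixes f :: "nat \<Rightarrow> 'a::comm_monoid_add"
  shows "(\<Sum>i<M*N. f i) = (\<Sum>i<M. \<Sum>k<N. f (i*N+k))"
proof -
  have "(\<Sum>i<M*N. f i) = (\<Sum>i<M. sum f {i*N..<i*N+N})"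
    using sum.nat_group[of f N M] by simp
  also have "\<dots> = (\<Sum>i<M. \<Sum>k<N. f (i*N+k))"
  proof (rule sum.cong[OF refl])
    fix i show "sum f {i*N..<i*N+N} = (\<Sum>k<N. f (i*N+k))"
      using sum.shift_bounds_nat_ivl[of f 0 "i*N" N]
      by (simp add: atLeast0LessThan add.commute)
  qed
  finally show ?thesis .
qed

lemma divmod_idx:
  assumes "k < (N::nat)" shows "(i*N+k) div N = i" "(i*N+k) mod N = k"
  using assms by simp_all

definition frob :: "complex mat \<Rightarrow> real" where
  "frob A = (\<Sum>i<dim_row A. \<Sum>j<dim_col A. (cmod (A $$ (i,j)))\<^sup>2)"

lemma mtrace_mult:
  assumes "A \<in> carrier_mat n m" "B \<in> carrier_mat m n"
  shows "mtrace (A * B) = (\<Sum>i<n. \<Sum>l<m. A $$ (i,l) * B $$ (l,i))"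
  using assms unfolding mtrace_def by (auto intro!: sum.cong simp: scalar_prod_def atLeast0LessThan)

lemma mtrace_comm:
  assumes "A \<in> carrier_mat n m" "B \<in> carrier_mat m n"
  shows "mtrace (A * B) = mtrace (B * A)"
  unfolding mtrace_mult[OF assms] mtrace_mult[OF assms(2,1)]
  by (subst sum.swap) (simp add: mult.commute)

lemma adj_carrier[simp]: "dim_row (adj A) = dim_col A" "dim_col (adj A) = dim_row A"
  unfolding adj_def by simp_all

lemma adj_index[simp]: "i < dim_col A \<Longrightarrow> j < dim_row A \<Longrightarrow> adj A $$ (i,j) = cnj (A $$ (j,i))"
  unfolding adj_def by simp

lemma adj_carrier_mat: "A \<in> carrier_mat n m \<Longrightarrow> adj A \<in> carrier_mat m n"
  unfolding carrier_mat_def by simp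

lemma adj_adj: "adj (adj A) = A"
  by (rule eq_matI) simp_all

lemma adj_mult:
  assumes "A \<in> carrier_mat n m" "B \<in> carrier_mat m k"
  shows "adj (A * B) = adj B * adj A"
proof (rule eq_matI)
  fix i j assume ij: "i < dim_row (adj B * adj A)" "j < dim_col (adj B * adj A)"
  have "adj (A * B) $$ (i, j) = cnj ((A*B) $$ (j,i))" using ij assms by simp
  also have "\<dots> = cnj (\<Sum>l<m. A $$ (j,l) * B $$ (l,i))"
    using ij assms by (simp add: scalar_prod_def atLeast0LessThan)
  also have "\<dots> = (\<Sum>l<m. adj B $$ (i,l) * adj A $$ (l,j))"
    using ij assms by (simp add: mult.commute)
  also have "\<dots> = (adj B * adj A) $$ (i,j)"
    using ij assms by (simp add: scalar_prod_def atLeast0LessThan)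
  finally show "adj (A * B) $$ (i, j) = (adj B * adj A) $$ (i, j)" .
qed (use assms in auto)

lemma frob_trace: "frob A = Re (mtrace (adj A * A))"
proof -
  have c: "A \<in> carrier_mat (dim_row A) (dim_col A)" by (rule carrier_matI) simp_all
  have "mtrace (adj A * A) = (\<Sum>i<dim_col A. \<Sum>l<dim_row A. adj A $$ (i,l) * A $$ (l,i))"
    by (rule mtrace_mult[OF adj_carrier_mat[OF c] c])
  also have "\<dots> = (\<Sum>i<dim_col A. \<Sum>l<dim_row A. complex_of_real ((cmod (A $$ (l,i)))\<^sup>2))"
  proof (intro sum.cong refl)
    fix i l assume "i \<in> {..<dim_col A}" "l \<in> {..<dim_row A}"
    then show "adj A $$ (i,l) * A $$ (l,i) = complex_of_real ((cmod (A $$ (l,i)))\<^sup>2)"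
      using complex_norm_square[of "A $$ (l,i)"] by (simp add: mult.commute)
  qed
  finally have "Re (mtrace (adj A * A)) = (\<Sum>i<dim_col A. \<Sum>l<dim_row A. (cmod (A $$ (l,i)))\<^sup>2)"
    by simp
  also have "\<dots> = frob A" unfolding frob_def by (rule sum.swap[symmetric])
  finally show ?thesis by simp
qed

lemma frob_unitary:
  assumes u: "unitary_mat N U" and o: "Ob \<in> carrier_mat N N"
  shows "frob (U * Ob * adj U) = frob Ob"
proof -
  have U: "U \<in> carrier_mat N N" and UU: "U * adj U = 1\<^sub>m N" using u unfolding unitary_mat_def by auto
  have aU: "adj U \<in> carrier_mat N N" by (rule adj_carrier_mat[OF U])
  have aO: "adj Ob \<in> carrier_mat N N" by (rule adj_carrier_mat[OF o])
  have UU2: "adj U * U = 1\<^sub>m N" by (rule mat_mult_left_right_inverse[OF U aU UU])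
  have UO: "U * Ob \<in> carrier_mat N N" using U o by simp
  have "adj (U * Ob * adj U) = adj (adj U) * adj (U * Ob)" by (rule adj_mult[OF UO aU])
  also have "\<dots> = U * (adj Ob * adj U)" by (simp add: adj_adj adj_mult[OF U o])
  finally have e1: "adj (U * Ob * adj U) = U * (adj Ob * adj U)" .
  have "U * (adj Ob * adj U) * (U * Ob * adj U) = U * (adj Ob * ((adj U * U) * (Ob * adj U)))"
    using U o aU aO by (simp add: assoc_mult_mat[of _ N N _ N _ N])
  also have "\<dots> = U * ((adj Ob * Ob) * adj U)"
    using U o aU aO UU2 by (simp add: assoc_mult_mat[of _ N N _ N _ N])
  finally have e2: "adj (U * Ob * adj U) * (U * Ob * adj U) = U * ((adj Ob * Ob) * adj U)"
    using e1 by simp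
  have M: "adj Ob * Ob * adj U \<in> carrier_mat N N" using aO o aU by simp
  have "mtrace (U * ((adj Ob * Ob) * adj U)) = mtrace (((adj Ob * Ob) * adj U) * U)"
    by (rule mtrace_comm[OF U M])
  also have "\<dots> = mtrace (adj Ob * Ob)"
    using aO o aU UU2 U by (simp add: assoc_mult_mat[of _ N N _ N _ N])
  finally show ?thesis unfolding frob_trace e2 by simp
qed

lemma sum2_mult_index:
  fixes F :: "nat \<Rightarrow> nat \<Rightarrow> 'a::comm_monoid_add"
  shows "(\<Sum>I<M*N. \<Sum>J<M'*N'. F I J) = (\<Sum>i<M. \<Sum>k<N. \<Sum>j<M'. \<Sum>l<N'. F (i*N+k) (j*N'+l))"
  by (simp add: sum_mult_index[of _ M N] sum_mult_index[of _ M' N'])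

lemma sum4_swap:
  fixes h :: "nat \<Rightarrow> nat \<Rightarrow> nat \<Rightarrow> nat \<Rightarrow> 'a::comm_monoid_add"
  shows "(\<Sum>i<M. \<Sum>k<N. \<Sum>j<M'. \<Sum>l<N'. h i k j l) = (\<Sum>i<M. \<Sum>j<M'. \<Sum>k<N. \<Sum>l<N'. h i k j l)"
  by (rule sum.cong[OF refl], rule sum.swap)

lemma sum4_regroup:
  fixes f g :: "nat \<Rightarrow> nat \<Rightarrow> 'a::comm_semiring_1"
  shows "(\<Sum>i<M. \<Sum>k<N. \<Sum>j<M'. \<Sum>l<N'. f i j * g k l) = (\<Sum>i<M. \<Sum>j<M'. f i j) * (\<Sum>k<N. \<Sum>l<N'. g k l)"
proof -
  have "(\<Sum>i<M. \<Sum>j<M'. f i j) * (\<Sum>k<N. \<Sum>l<N'. g k l) = (\<Sum>i<M. \<Sum>j<M'. f i j * (\<Sum>k<N. \<Sum>l<N'. g k l))"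
    by (simp add: sum_distrib_right)
  also have "\<dots> = (\<Sum>i<M. \<Sum>j<M'. \<Sum>k<N. \<Sum>l<N'. f i j * g k l)"
    by (simp add: sum_distrib_left)
  finally show ?thesis by (subst sum4_swap) simp
qed

lemma kron_dim[simp]: "dim_row (kron A B) = dim_row A * dim_row B" "dim_col (kron A B) = dim_col A * dim_col B"
  unfolding kron_def by simp_all

lemma kron_carrier: "A \<in> carrier_mat m m' \<Longrightarrow> B \<in> carrier_mat n n' \<Longrightarrow> kron A B \<in> carrier_mat (m*n) (m'*n')"
  by (rule carrier_matI) (simp_all add: carrier_matD)

lemma idx_bound: assumes "i < (M::nat)" "k < N" shows "i * N + k < M * N"
proof -
  have "i * N + k < (i+1) * N" using assms by simp
  also have "\<dots> \<le> M * N" using assms by (intro mult_le_mono1) simp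
  finally show ?thesis .
qed

lemma kron_index:
  assumes "i < dim_row A" "k < dim_row B" "j < dim_col A" "l < dim_col B"
  shows "kron A B $$ (i * dim_row B + k, j * dim_col B + l) = A $$ (i,j) * B $$ (k,l)"
  using assms idx_bound[OF assms(1,2)] idx_bound[OF assms(3,4)] unfolding kron_def by simp

lemma frob_kron: "frob (kron A B) = frob A * frob B"
proof -
  have "frob (kron A B) = (\<Sum>i<dim_row A. \<Sum>k<dim_row B. \<Sum>j<dim_col A. \<Sum>l<dim_col B.
      (cmod (kron A B $$ (i * dim_row B + k, j * dim_col B + l)))\<^sup>2)"
    unfolding frob_def kron_dim by (rule sum2_mult_index)
  also have "\<dots> = (\<Sum>i<dim_row A. \<Sum>k<dim_row B. \<Sum>j<dim_col A. \<Sum>l<dim_col B.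
      (cmod (A $$ (i,j)))\<^sup>2 * (cmod (B $$ (k,l)))\<^sup>2)"
    by (intro sum.cong refl) (simp add: kron_index norm_mult power_mult_distrib)
  also have "\<dots> = frob A * frob B" unfolding frob_def by (rule sum4_regroup)
  finally show ?thesis .
qed

lemma mtrace_kron_mult:
  assumes C: "C \<in> carrier_mat M M" and A: "A \<in> carrier_mat M M"
    and D: "D \<in> carrier_mat N N" and B: "B \<in> carrier_mat N N"
  shows "mtrace (kron C D * kron A B) = mtrace (C * A) * mtrace (D * B)"
proof -
  have "mtrace (kron C D * kron A B) = (\<Sum>I<M*N. \<Sum>J<M*N. kron C D $$ (I,J) * kron A B $$ (J,I))"
    by (rule mtrace_mult[OF kron_carrier[OF C D] kron_carrier[OF A B]])
  also have "\<dots> = (\<Sum>i<M. \<Sum>k<N. \<Sum>j<M. \<Sum>l<N.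
      kron C D $$ (i*N+k, j*N+l) * kron A B $$ (j*N+l, i*N+k))"
    by (rule sum2_mult_index)
  also have "\<dots> = (\<Sum>i<M. \<Sum>k<N. \<Sum>j<M. \<Sum>l<N. (C $$ (i,j) * A $$ (j,i)) * (D $$ (k,l) * B $$ (l,k)))"
    using C D A B kron_index[of _ C _ D] kron_index[of _ A _ B]
    by (intro sum.cong refl) (simp add: carrier_matD ac_simps)
  also have "\<dots> = mtrace (C * A) * mtrace (D * B)"
    by (simp add: sum4_regroup mtrace_mult[OF C A] mtrace_mult[OF D B])
  finally show ?thesis .
qed

definition parseval :: "nat \<Rightarrow> 'x set \<Rightarrow> ('x \<Rightarrow> complex mat) \<Rightarrow> bool" where
  "parseval N S f \<longleftrightarrow> finite S \<and> (\<forall>x\<in>S. f x \<in> carrier_mat N N) \<and>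
     (\<forall>Ob\<in>carrier_mat N N. (\<Sum>x\<in>S. (cmod (mtrace (Ob * f x)))\<^sup>2) = real N * frob Ob)"

lemma parseval_kron:
  assumes pf: "parseval M S f" and pg: "parseval N T g"
  shows "parseval (M*N) (S \<times> T) (\<lambda>(x,y). kron (f x) (g y))"
proof -
  have fS: "finite S" and fc: "\<And>x. x \<in> S \<Longrightarrow> f x \<in> carrier_mat M M"
    and fp: "\<And>Ob. Ob \<in> carrier_mat M M \<Longrightarrow> (\<Sum>x\<in>S. (cmod (mtrace (Ob * f x)))\<^sup>2) = real M * frob Ob"
    using pf unfolding parseval_def by auto
  have gT: "finite T" and gc: "\<And>x. x \<in> T \<Longrightarrow> g x \<in> carrier_mat N N"
    and gp: "\<And>Ob. Ob \<in> carrier_mat N N \<Longrightarrow> (\<Sum>x\<in>T. (cmod (mtrace (Ob * g x)))\<^sup>2) = real N * frob Ob"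
    using pg unfolding parseval_def by auto
  have main: "(\<Sum>p\<in>S \<times> T. (cmod (mtrace (Ob * (case p of (x,y) \<Rightarrow> kron (f x) (g y)))))\<^sup>2) = real (M*N) * frob Ob"
    if Ob: "Ob \<in> carrier_mat (M*N) (M*N)" for Ob
  proof -
    define blk where "blk i j = mat N N (\<lambda>(k,l). Ob $$ (i*N+k, j*N+l))" for i j
    define Q where "Q y = mat M M (\<lambda>(i,j). mtrace (blk i j * g y))" for y
    have blkc: "blk i j \<in> carrier_mat N N" for i j unfolding blk_def by (rule carrier_matI) simp_all
    have blki: "k < N \<Longrightarrow> l < N \<Longrightarrow> blk i j $$ (k,l) = Ob $$ (i*N+k, j*N+l)" for i j k l
      unfolding blk_def by simp
    have blkd[simp]: "dim_row (blk i j) = N" "dim_col (blk i j) = N" for i j unfolding blk_def by simp_all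
    have Qd[simp]: "dim_row (Q y) = M" "dim_col (Q y) = M" for y unfolding Q_def by simp_all
    have Qc: "Q y \<in> carrier_mat M M" for y unfolding Q_def by (rule carrier_matI) simp_all
    have Qi: "i < M \<Longrightarrow> j < M \<Longrightarrow> Q y $$ (i,j) = mtrace (blk i j * g y)" for i j y
      unfolding Q_def by simp
    have tr: "mtrace (Ob * kron (f x) (g y)) = mtrace (Q y * f x)" if x: "x \<in> S" and y: "y \<in> T" for x y
    proof -
      have A: "f x \<in> carrier_mat M M" by (rule fc[OF x])
      have B: "g y \<in> carrier_mat N N" by (rule gc[OF y])
      have "mtrace (Ob * kron (f x) (g y)) = (\<Sum>I<M*N. \<Sum>J<M*N. Ob $$ (I,J) * kron (f x) (g y) $$ (J,I))"
        by (rule mtrace_mult[OF Ob kron_carrier[OF A B]])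
      also have "\<dots> = (\<Sum>i<M. \<Sum>k<N. \<Sum>j<M. \<Sum>l<N.
          Ob $$ (i*N+k, j*N+l) * kron (f x) (g y) $$ (j*N+l, i*N+k))"
        by (rule sum2_mult_index)
      also have "\<dots> = (\<Sum>i<M. \<Sum>k<N. \<Sum>j<M. \<Sum>l<N.
          Ob $$ (i*N+k, j*N+l) * (f x $$ (j,i) * g y $$ (l,k)))"
        using A B kron_index[of _ "f x" _ "g y"]
        by (intro sum.cong refl) (simp add: carrier_matD)
      also have "\<dots> = (\<Sum>i<M. \<Sum>j<M. \<Sum>k<N. \<Sum>l<N.
          Ob $$ (i*N+k, j*N+l) * (f x $$ (j,i) * g y $$ (l,k)))"
        by (rule sum4_swap)
      also have "\<dots> = (\<Sum>i<M. \<Sum>j<M. (\<Sum>k<N. \<Sum>l<N. blk i j $$ (k,l) * g y $$ (l,k)) * f x $$ (j,i))"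
        by (intro sum.cong refl) (simp add: sum_distrib_left sum_distrib_right blki ac_simps)
      also have "\<dots> = (\<Sum>i<M. \<Sum>j<M. Q y $$ (i,j) * f x $$ (j,i))"
        by (intro sum.cong refl) (simp add: Qi mtrace_mult[OF blkc B])
      also have "\<dots> = mtrace (Q y * f x)" by (rule mtrace_mult[OF Qc A, symmetric])
      finally show ?thesis .
    qed
    have fr: "frob Ob = (\<Sum>i<M. \<Sum>j<M. frob (blk i j))"
    proof -
      have "frob Ob = (\<Sum>I<M*N. \<Sum>J<M*N. (cmod (Ob $$ (I,J)))\<^sup>2)"
        unfolding frob_def using Ob by (simp add: carrier_matD)
      also have "\<dots> = (\<Sum>i<M. \<Sum>k<N. \<Sum>j<M. \<Sum>l<N. (cmod (Ob $$ (i*N+k, j*N+l)))\<^sup>2)"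
        by (rule sum2_mult_index)
      also have "\<dots> = (\<Sum>i<M. \<Sum>j<M. \<Sum>k<N. \<Sum>l<N. (cmod (Ob $$ (i*N+k, j*N+l)))\<^sup>2)"
        by (rule sum4_swap)
      also have "\<dots> = (\<Sum>i<M. \<Sum>j<M. frob (blk i j))"
        unfolding frob_def blkd by (intro sum.cong refl) (simp add: blki)
      finally show ?thesis .
    qed
    have "(\<Sum>p\<in>S \<times> T. (cmod (mtrace (Ob * (case p of (x,y) \<Rightarrow> kron (f x) (g y)))))\<^sup>2)
        = (\<Sum>x\<in>S. \<Sum>y\<in>T. (cmod (mtrace (Ob * kron (f x) (g y))))\<^sup>2)"
      by (simp add: sum.cartesian_product split_def)
    also have "\<dots> = (\<Sum>x\<in>S. \<Sum>y\<in>T. (cmod (mtrace (Q y * f x)))\<^sup>2)"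
      by (intro sum.cong refl) (simp add: tr)
    also have "\<dots> = (\<Sum>y\<in>T. \<Sum>x\<in>S. (cmod (mtrace (Q y * f x)))\<^sup>2)"
      by (rule sum.swap)
    also have "\<dots> = (\<Sum>y\<in>T. real M * frob (Q y))"
      by (intro sum.cong refl) (rule fp[OF Qc])
    also have "\<dots> = real M * (\<Sum>y\<in>T. \<Sum>i<M. \<Sum>j<M. (cmod (mtrace (blk i j * g y)))\<^sup>2)"
      unfolding sum_distrib_left frob_def Qd
      by (intro sum.cong refl) (simp add: Qi)
    also have "(\<Sum>y\<in>T. \<Sum>i<M. \<Sum>j<M. (cmod (mtrace (blk i j * g y)))\<^sup>2)
        = (\<Sum>i<M. \<Sum>y\<in>T. \<Sum>j<M. (cmod (mtrace (blk i j * g y)))\<^sup>2)"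
      by (rule sum.swap)
    also have "\<dots> = (\<Sum>i<M. \<Sum>j<M. \<Sum>y\<in>T. (cmod (mtrace (blk i j * g y)))\<^sup>2)"
      by (rule sum.cong[OF refl], rule sum.swap)
    also have "\<dots> = (\<Sum>i<M. \<Sum>j<M. real N * frob (blk i j))"
      by (intro sum.cong refl) (rule gp[OF blkc])
    also have "\<dots> = real N * frob Ob"
      unfolding fr by (simp add: sum_distrib_left)
    finally show ?thesis by simp
  qed
  show ?thesis unfolding parseval_def
    using fS gT fc gc main kron_carrier[of "f _" M M "g _" N N] by auto
qed

definition omega :: "nat \<Rightarrow> complex" where "omega d = cis (2 * pi / real d)"

lemma omega_pow: "omega d ^ m = cis (real m * (2 * pi / real d))"
  unfolding omega_def by (simp add: DeMoivre)

lemma omega_pow_d: "d > 0 \<Longrightarrow> omega d ^ d = 1"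
  unfolding omega_pow by simp

lemma omega_pow_eq1:
  assumes d: "d > 0" shows "omega d ^ m = 1 \<longleftrightarrow> d dvd m"
proof
  assume "d dvd m" then obtain q where "m = d * q" by auto
  then show "omega d ^ m = 1" using omega_pow_d[OF d] by (simp add: power_mult)
next
  assume "omega d ^ m = 1"
  hence "cos (real m * (2 * pi / real d)) = 1" unfolding omega_pow by (simp add: complex_eq_iff)
  then obtain k :: int where "real m * (2 * pi / real d) = k * 2 * pi" by (auto simp: cos_one_2pi_int)
  hence "real m = k * real d" using d by (simp add: field_simps)
  hence "int m = k * int d" by (metis of_int_eq_iff of_int_mult of_int_of_nat_eq)
  thus "d dvd m" by (metis dvd_triv_right int_dvd_int_iff)
qed

lemma omega_norm[simp]: "cmod (omega d) = 1"
  unfolding omega_def by simp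

lemma omega_sum:
  assumes d: "d > 0" shows "(\<Sum>t<d. (omega d ^ m) ^ t) = (if d dvd m then of_nat d else 0)"
proof (cases "d dvd m")
  case True
  hence "omega d ^ m = 1" using omega_pow_eq1[OF d] by simp
  thus ?thesis using True by simp
next
  case False
  hence ne: "omega d ^ m \<noteq> 1" using omega_pow_eq1[OF d] by simp
  have "(\<Sum>t<d. (omega d ^ m) ^ t) = ((omega d ^ m) ^ d - 1) / (omega d ^ m - 1)"
    by (rule geometric_sum[OF ne])
  also have "(omega d ^ m) ^ d = 1"
    by (simp add: power_mult[symmetric] mult.commute[of m d] power_mult omega_pow_d[OF d])
  finally show ?thesis using False by simp
qed

lemma exp_omega: "exp (complex_of_real (2 * pi) * \<i> * of_nat j / of_nat d) = omega d ^ j"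
  unfolding omega_pow cis_conv_exp by (simp add: field_simps)

lemma clockZ_index:
  assumes "j < d" "k < d"
  shows "clockZ d $$ (j,k) = (if j = k then omega d ^ j else 0)"
  unfolding clockZ_def by (simp only: index_mat[OF assms] prod.case exp_omega)

lemma shiftX_carrier: "shiftX d \<in> carrier_mat d d"
  unfolding shiftX_def by (rule carrier_matI) simp_all

lemma clockZ_carrier: "clockZ d \<in> carrier_mat d d"
  unfolding clockZ_def by (rule carrier_matI) simp_all

lemma pauli1_carrier: "pauli1 d a \<in> carrier_mat d d"
  unfolding pauli1_def using shiftX_carrier clockZ_carrier
  by (metis mult_carrier_mat pow_carrier_mat)

lemma pauli1_dim[simp]: "dim_row (pauli1 d a) = d" "dim_col (pauli1 d a) = d"
  using pauli1_carrier[of d a] by (simp_all add: carrier_matD)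

lemma shiftX_pow:
  assumes "j < d" "k < d"
  shows "(shiftX d ^\<^sub>m s) $$ (j,k) = (if j = (k+s) mod d then 1 else 0)"
  using assms
proof (induction s arbitrary: j k)
  case 0 thus ?case using shiftX_carrier[of d] by (simp add: carrier_matD)
next
  case (Suc s)
  have X: "shiftX d \<in> carrier_mat d d" by (rule shiftX_carrier)
  have "(shiftX d ^\<^sub>m Suc s) $$ (j,k) = (\<Sum>l<d. (shiftX d ^\<^sub>m s) $$ (j,l) * shiftX d $$ (l,k))"
    using Suc.prems X by (simp add: carrier_matD scalar_prod_def atLeast0LessThan)
  also have "\<dots> = (\<Sum>l<d. if l = (k+1) mod d then (if j = (l+s) mod d then 1 else 0) else 0)"
    using Suc.prems Suc.IH by (intro sum.cong refl) (simp add: shiftX_def)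
  also have "\<dots> = (if j = ((k+1) mod d + s) mod d then 1 else 0)"
    using Suc.prems by (simp add: sum.delta)
  also have "((k+1) mod d + s) mod d = (k + Suc s) mod d" by (simp add: mod_add_left_eq)
  finally show ?case .
qed

lemma clockZ_pow:
  assumes "j < d" "k < d"
  shows "(clockZ d ^\<^sub>m t) $$ (j,k) = (if j = k then omega d ^ (j*t) else 0)"
  using assms
proof (induction t arbitrary: j k)
  case 0 thus ?case using clockZ_carrier[of d] by (simp add: carrier_matD)
next
  case (Suc t)
  have Z: "clockZ d \<in> carrier_mat d d" by (rule clockZ_carrier)
  have "(clockZ d ^\<^sub>m Suc t) $$ (j,k) = (\<Sum>l<d. (clockZ d ^\<^sub>m t) $$ (j,l) * clockZ d $$ (l,k))"
    using Suc.prems Z by (simp add: carrier_matD scalar_prod_def atLeast0LessThan)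
  also have "\<dots> = (\<Sum>l<d. if l = j then (if j = k then omega d ^ (j*t) * omega d ^ j else 0) else 0)"
    using Suc.prems Suc.IH by (intro sum.cong refl) (auto simp: clockZ_index)
  also have "\<dots> = (if j = k then omega d ^ (j * Suc t) else 0)"
    using Suc.prems by (simp add: sum.delta power_add[symmetric] algebra_simps)
  finally show ?case .
qed

lemma pauli1_index:
  assumes "j < d" "k < d"
  shows "pauli1 d (s,t) $$ (j,k) = (if j = (k+s) mod d then omega d ^ (k*t) else 0)"
proof -
  have "pauli1 d (s,t) $$ (j,k) = (\<Sum>l<d. (shiftX d ^\<^sub>m s) $$ (j,l) * (clockZ d ^\<^sub>m t) $$ (l,k))"
    unfolding pauli1_def using assms shiftX_carrier[of d] clockZ_carrier[of d]
    by (simp add: carrier_matD scalar_prod_def atLeast0LessThan)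
  also have "\<dots> = (\<Sum>l<d. if l = k then (if j = (k+s) mod d then omega d ^ (k*t) else 0) else 0)"
    using assms by (intro sum.cong refl) (auto simp: shiftX_pow clockZ_pow)
  also have "\<dots> = (if j = (k+s) mod d then omega d ^ (k*t) else 0)"
    using assms by (simp add: sum.delta)
  finally show ?thesis .
qed

lemma mod_add_cases:
  assumes "i < (d::nat)" "a < d" shows "(i + a) mod d = (if i + a < d then i + a else i + a - d)"
proof (cases "i + a < d")
  case False
  hence "(i + a) mod d = (i + a - d) mod d" by (simp add: le_mod_geq)
  also have "\<dots> = i + a - d" using assms False by simp
  finally show ?thesis using False by simp
qed simp

lemma sum_shift_mod:
  fixes f :: "nat \<Rightarrow> 'a::comm_monoid_add"
  assumes i: "i < d"
  shows "(\<Sum>s<d. f ((i+s) mod d)) = (\<Sum>j<d. f j)"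
proof (rule sum.reindex_bij_witness[of _ "\<lambda>j. (j + d - i) mod d" "\<lambda>s. (i+s) mod d"])
  fix a assume a: "a \<in> {..<d}"
  show "((i + a) mod d + d - i) mod d = a"
    using a i by (auto simp: mod_add_cases)
  show "(i + a) mod d \<in> {..<d}" using i by simp
next
  fix b assume b: "b \<in> {..<d}"
  have "(i + (b + d - i) mod d) mod d = (i + (b + d - i)) mod d" by (simp add: mod_add_right_eq)
  also have "i + (b + d - i) = b + d" using i by simp
  finally show "(i + (b + d - i) mod d) mod d = b" using b by simp
  show "(b + d - i) mod d \<in> {..<d}" using i by simp
qed simp

lemma mtrace_pauli1:
  assumes O: "Ob \<in> carrier_mat d d"
  shows "mtrace (Ob * pauli1 d (s,t)) = (\<Sum>i<d. Ob $$ (i, (i+s) mod d) * omega d ^ (i*t))"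
proof -
  have "mtrace (Ob * pauli1 d (s,t)) = (\<Sum>i<d. \<Sum>l<d. Ob $$ (i,l) * pauli1 d (s,t) $$ (l,i))"
    by (rule mtrace_mult[OF O pauli1_carrier])
  also have "\<dots> = (\<Sum>i<d. \<Sum>l<d. if l = (i+s) mod d then Ob $$ (i,l) * omega d ^ (i*t) else 0)"
    by (intro sum.cong refl) (simp add: pauli1_index)
  also have "\<dots> = (\<Sum>i<d. Ob $$ (i, (i+s) mod d) * omega d ^ (i*t))"
    by (intro sum.cong refl) (simp add: sum.delta)
  finally show ?thesis .
qed

lemma dvd_range_eq:
  assumes "0 < x" "x < 2 * d" "(d::nat) dvd x" shows "x = d"
proof -
  obtain q where q: "x = d * q" using assms by auto
  have "q < 2" using assms q by (metis mult_less_cancel1 mult.commute)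
  moreover have "q \<noteq> 0" using assms q by auto
  ultimately have "q = 1" by auto
  thus ?thesis using q by simp
qed

lemma omega_prod_cnj:
  assumes d: "d > 0" and k': "k' < d"
  shows "omega d ^ (k*t) * cnj (omega d ^ (k'*t)) = (omega d ^ (k + d - k')) ^ t"
proof -
  define b where "b = omega d ^ (k'*t)"
  have bb: "b * cnj b = 1" unfolding b_def
    using complex_norm_square[of "omega d ^ (k'*t)"] by (simp add: norm_power)
  have "(omega d ^ (k + d - k')) ^ t * b = (omega d ^ (k + d - k') * omega d ^ k') ^ t"
    unfolding b_def by (simp add: power_mult_distrib power_mult mult.commute)
  also have "omega d ^ (k + d - k') * omega d ^ k' = omega d ^ (k + d)"
    using k' by (simp add: power_add[symmetric])
  also have "(omega d ^ (k + d)) ^ t = omega d ^ (k*t)"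
    using omega_pow_d[OF d] by (simp add: power_add power_mult[symmetric] mult.commute)
  finally have "omega d ^ (k*t) * cnj b = (omega d ^ (k + d - k')) ^ t * (b * cnj b)"
    by (simp add: mult.assoc)
  hence "omega d ^ (k*t) * cnj b = (omega d ^ (k + d - k')) ^ t" using bb by simp
  thus ?thesis unfolding b_def .
qed

lemma dft_parseval:
  assumes d: "d > 0"
  shows "(\<Sum>t<d. (cmod (\<Sum>k<d. y k * omega d ^ (k*t)))\<^sup>2) = real d * (\<Sum>k<d. (cmod (y k))\<^sup>2)"
proof -
  have "complex_of_real (\<Sum>t<d. (cmod (\<Sum>k<d. y k * omega d ^ (k*t)))\<^sup>2)
      = (\<Sum>t<d. (\<Sum>k<d. y k * omega d ^ (k*t)) * cnj (\<Sum>k'<d. y k' * omega d ^ (k'*t)))"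
    by (simp only: of_real_sum complex_norm_square)
  also have "\<dots> = (\<Sum>t<d. \<Sum>k<d. \<Sum>k'<d. (y k * omega d ^ (k*t)) * cnj (y k' * omega d ^ (k'*t)))"
    by (simp only: cnj_sum sum_product)
  also have "\<dots> = (\<Sum>t<d. \<Sum>k<d. \<Sum>k'<d. (y k * cnj (y k')) * (omega d ^ (k*t) * cnj (omega d ^ (k'*t))))"
    by (intro sum.cong refl) (simp only: complex_cnj_mult ac_simps)
  also have "\<dots> = (\<Sum>t<d. \<Sum>k<d. \<Sum>k'<d. (y k * cnj (y k')) * (omega d ^ (k + d - k')) ^ t)"
    using d by (intro sum.cong refl) (simp only: omega_prod_cnj[OF d] lessThan_iff)
  also have "\<dots> = (\<Sum>k<d. \<Sum>t<d. \<Sum>k'<d. (y k * cnj (y k')) * (omega d ^ (k + d - k')) ^ t)"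
    by (rule sum.swap)
  also have "\<dots> = (\<Sum>k<d. \<Sum>k'<d. \<Sum>t<d. (y k * cnj (y k')) * (omega d ^ (k + d - k')) ^ t)"
    by (rule sum.cong[OF refl], rule sum.swap)
  also have "\<dots> = (\<Sum>k<d. \<Sum>k'<d. (y k * cnj (y k')) * (if k' = k then of_nat d else 0))"
  proof (intro sum.cong refl)
    fix k k' assume k: "k \<in> {..<d}" and k': "k' \<in> {..<d}"
    have "(d dvd (k + d - k')) = (k' = k)"
    proof
      assume "d dvd (k + d - k')"
      hence "k + d - k' = d" using k k' by (intro dvd_range_eq) auto
      thus "k' = k" using k' by simp
    qed simp
    thus "(\<Sum>t<d. (y k * cnj (y k')) * (omega d ^ (k + d - k')) ^ t) = (y k * cnj (y k')) * (if k' = k then of_nat d else 0)"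
      by (simp add: sum_distrib_left[symmetric] omega_sum[OF d])
  qed
  also have "\<dots> = (\<Sum>k<d. of_nat d * (y k * cnj (y k)))"
  proof (intro sum.cong refl)
    fix k assume k: "k \<in> {..<d}"
    have "(\<Sum>k'<d. (y k * cnj (y k')) * (if k' = k then of_nat d else 0))
        = (\<Sum>k'<d. if k' = k then of_nat d * (y k * cnj (y k)) else 0)"
      by (intro sum.cong refl) simp
    also have "\<dots> = of_nat d * (y k * cnj (y k))" using k by (simp add: sum.delta)
    finally show "(\<Sum>k'<d. (y k * cnj (y k')) * (if k' = k then of_nat d else 0)) = of_nat d * (y k * cnj (y k))" .
  qed
  also have "\<dots> = complex_of_real (real d * (\<Sum>k<d. (cmod (y k))\<^sup>2))"
    by (simp only: of_real_mult of_real_sum complex_norm_square sum_distrib_left of_real_of_nat_eq)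
  finally show ?thesis by (simp only: of_real_eq_iff)
qed

lemma parseval_pauli1:
  assumes d: "d > 0"
  shows "parseval d ({0..<d} \<times> {0..<d}) (pauli1 d)"
proof -
  have "(\<Sum>p\<in>{0..<d} \<times> {0..<d}. (cmod (mtrace (Ob * pauli1 d p)))\<^sup>2) = real d * frob Ob"
    if O: "Ob \<in> carrier_mat d d" for Ob
  proof -
    have "(\<Sum>p\<in>{0..<d} \<times> {0..<d}. (cmod (mtrace (Ob * pauli1 d p)))\<^sup>2)
        = (\<Sum>s<d. \<Sum>t<d. (cmod (mtrace (Ob * pauli1 d (s,t))))\<^sup>2)"
      by (simp add: sum.cartesian_product atLeast0LessThan split_def)
    also have "\<dots> = (\<Sum>s<d. \<Sum>t<d. (cmod (\<Sum>i<d. Ob $$ (i, (i+s) mod d) * omega d ^ (i*t)))\<^sup>2)"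
      by (simp add: mtrace_pauli1[OF O])
    also have "\<dots> = (\<Sum>s<d. real d * (\<Sum>i<d. (cmod (Ob $$ (i, (i+s) mod d)))\<^sup>2))"
      by (intro sum.cong refl) (rule dft_parseval[OF d])
    also have "\<dots> = real d * (\<Sum>i<d. \<Sum>s<d. (cmod (Ob $$ (i, (i+s) mod d)))\<^sup>2)"
      unfolding sum_distrib_left[symmetric] by (rule arg_cong[where f="\<lambda>x. real d * x"], rule sum.swap)
    also have "\<dots> = real d * (\<Sum>i<d. \<Sum>j<d. (cmod (Ob $$ (i, j)))\<^sup>2)"
    proof -
      have "(\<Sum>s<d. (cmod (Ob $$ (i, (i+s) mod d)))\<^sup>2) = (\<Sum>j<d. (cmod (Ob $$ (i, j)))\<^sup>2)"
        if "i < d" for i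
        by (rule sum_shift_mod[where f="\<lambda>j. (cmod (Ob $$ (i, j)))\<^sup>2", OF that])
      thus ?thesis by simp
    qed
    also have "\<dots> = real d * frob Ob" unfolding frob_def using O by (simp add: carrier_matD)
    finally show ?thesis .
  qed
  thus ?thesis unfolding parseval_def using pauli1_carrier by auto
qed

lemma pauli1_00: "pauli1 d (0,0) = 1\<^sub>m d"
  unfolding pauli1_def using shiftX_carrier[of d] clockZ_carrier[of d] by (simp add: carrier_matD)

lemma mtrace_pauli1_zero:
  assumes "s < d" "t < d" "(s,t) \<noteq> (0,0)"
  shows "mtrace (pauli1 d (s,t)) = 0"
proof -
  have d: "d > 0" using assms by simp
  have "mtrace (pauli1 d (s,t)) = (\<Sum>i<d. if i = (i+s) mod d then omega d ^ (i*t) else 0)"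
    unfolding mtrace_def using pauli1_carrier[of d] by (intro sum.cong) (simp_all add: carrier_matD pauli1_index)
  also have "\<dots> = 0"
  proof (cases "s = 0")
    case True
    hence t: "0 < t" using assms by simp
    have "(\<Sum>i<d. if i = (i+s) mod d then omega d ^ (i*t) else 0) = (\<Sum>i<d. (omega d ^ t) ^ i)"
      using True by (intro sum.cong refl) (simp add: power_mult[symmetric] mult.commute)
    also have "\<dots> = 0" using omega_sum[OF d, of t] t assms(2) by (simp add: nat_dvd_not_less)
    finally show ?thesis .
  next
    case False
    have "i \<noteq> (i+s) mod d" if "i < d" for i
      using that assms False by (simp add: mod_add_cases, linarith)
    thus ?thesis by simp
  qed
  finally show ?thesis .
qed

lemma frob_pauli1:
  assumes "s < d" shows "frob (pauli1 d (s,t)) = real d"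
proof -
  have "frob (pauli1 d (s,t)) = (\<Sum>j<d. \<Sum>k<d. if j = (k+s) mod d then 1 else 0)"
    unfolding frob_def using pauli1_carrier[of d]
    by (intro sum.cong) (simp_all add: carrier_matD pauli1_index norm_power)
  also have "\<dots> = (\<Sum>k<d. \<Sum>j<d. if j = (k+s) mod d then 1 else 0)" by (rule sum.swap)
  also have "\<dots> = (\<Sum>k<d. 1)" by (intro sum.cong refl) (simp add: sum.delta)
  finally show ?thesis by simp
qed

lemma pauli_Nil: "pauli d [] = 1\<^sub>m 1" by (simp add: pauli_def)
lemma pauli_Cons: "pauli d (a # as) = kron (pauli1 d a) (pauli d as)" by (simp add: pauli_def)

lemma pauli_carrier: "pauli d as \<in> carrier_mat (d ^ length as) (d ^ length as)"
proof (induction as)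
  case Nil thus ?case by (simp add: pauli_Nil)
next
  case (Cons a as)
  show ?case unfolding pauli_Cons using kron_carrier[OF pauli1_carrier Cons.IH] by simp
qed

lemma pauli_vecs_0: "pauli_vecs d 0 = {[]}" by (auto simp: pauli_vecs_def)

lemma pauli_vecs_Suc:
  "pauli_vecs d (Suc n) = (\<lambda>(a,as). a # as) ` (({0..<d} \<times> {0..<d}) \<times> pauli_vecs d n)"
proof
  show "pauli_vecs d (Suc n) \<subseteq> (\<lambda>(a,as). a # as) ` (({0..<d} \<times> {0..<d}) \<times> pauli_vecs d n)"
  proof
    fix xs assume "xs \<in> pauli_vecs d (Suc n)"
    then obtain a as where xs: "xs = a # as" and "length as = n" "set (a # as) \<subseteq> {0..<d} \<times> {0..<d}"
      unfolding pauli_vecs_def by (cases xs) auto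
    thus "xs \<in> (\<lambda>(a,as). a # as) ` (({0..<d} \<times> {0..<d}) \<times> pauli_vecs d n)"
      unfolding pauli_vecs_def by (intro image_eqI[where x="(a,as)"]) auto
  qed
qed (auto simp: pauli_vecs_def)

lemma finite_pauli_vecs: "finite (pauli_vecs d n)"
  by (induction n) (simp_all add: pauli_vecs_0 pauli_vecs_Suc)

lemma parseval_reindex:
  assumes "parseval N A (f \<circ> h)" "inj_on h A"
  shows "parseval N (h ` A) f"
  using assms unfolding parseval_def by (auto simp: sum.reindex)

lemma parseval_pauli:
  assumes d: "d > 0" shows "parseval (d ^ n) (pauli_vecs d n) (pauli d)"
proof (induction n)
  case 0
  have "(\<Sum>x\<in>{[]}. (cmod (mtrace (Ob * pauli d x)))\<^sup>2) = real 1 * frob Ob"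
    if O: "Ob \<in> carrier_mat 1 1" for Ob
    using O by (simp add: pauli_Nil mtrace_def frob_def carrier_matD)
  thus ?case unfolding parseval_def pauli_vecs_0 using pauli_carrier[of d "[]"] by simp
next
  case (Suc n)
  have P: "parseval (d * d ^ n) (({0..<d} \<times> {0..<d}) \<times> pauli_vecs d n) (\<lambda>(x,y). kron (pauli1 d x) (pauli d y))"
    by (rule parseval_kron[OF parseval_pauli1[OF d] Suc.IH])
  have E: "pauli d \<circ> (\<lambda>(a,as). a # as) = (\<lambda>(x,y). kron (pauli1 d x) (pauli d y))"
    by (auto simp: pauli_Cons fun_eq_iff)
  have "parseval (d ^ Suc n) ((\<lambda>(a,as). a # as) ` (({0..<d} \<times> {0..<d}) \<times> pauli_vecs d n)) (pauli d)"
    by (rule parseval_reindex) (use P E in simp, auto simp: inj_on_def)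
  thus ?case unfolding pauli_vecs_Suc .
qed

lemma frob_pauli: "set as \<subseteq> {0..<d} \<times> {0..<d} \<Longrightarrow> frob (pauli d as) = real d ^ length as"
proof (induction as)
  case Nil thus ?case by (simp add: pauli_Nil frob_def)
next
  case (Cons a as)
  obtain s t where a: "a = (s,t)" by (cases a)
  have "s < d" using Cons.prems a by auto
  thus ?case using Cons by (simp add: pauli_Cons frob_kron a frob_pauli1)
qed

lemma pweight_Cons: "pweight (a # as) = (if a = (0,0) then 0 else 1) + pweight as"
  by (simp add: pweight_def)

lemma pweight_le: "pweight as \<le> length as"
  unfolding pweight_def by simp

lemma trace_pauli_zero:
  assumes "length a = length b" "set b \<subseteq> {0..<d} \<times> {0..<d}" "pweight a < pweight b"
  shows "mtrace (pauli d a * pauli d b) = 0"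
  using assms
proof (induction a b rule: list_induct2)
  case Nil thus ?case by (simp add: pweight_def)
next
  case (Cons x xs y ys)
  have eq: "mtrace (pauli d (x#xs) * pauli d (y#ys)) = mtrace (pauli1 d x * pauli1 d y) * mtrace (pauli d xs * pauli d ys)"
  proof -
    have c1: "pauli d xs \<in> carrier_mat (d^length xs) (d^length xs)" by (rule pauli_carrier)
    have c2: "pauli d ys \<in> carrier_mat (d^length xs) (d^length xs)" using pauli_carrier[of d ys] Cons.hyps by simp
    show ?thesis unfolding pauli_Cons by (rule mtrace_kron_mult[OF pauli1_carrier pauli1_carrier c1 c2])
  qed
  show ?case
  proof (cases "pweight xs < pweight ys")
    case True thus ?thesis using eq Cons by simp
  next
    case False
    hence x: "x = (0,0)" and y: "y \<noteq> (0,0)" using Cons.prems by (auto simp: pweight_Cons split: if_splits)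
    obtain s t where yst: "y = (s,t)" by (cases y)
    have "s < d" "t < d" using Cons.prems yst by auto
    hence "mtrace (pauli1 d y) = 0" using y yst by (simp add: mtrace_pauli1_zero)
    hence "mtrace (pauli1 d x * pauli1 d y) = 0" using x by (simp add: pauli1_00)
    thus ?thesis using eq by simp
  qed
qed

lemma sum_pauli_prob:
  assumes d: "d > 0" and O: "Ob \<in> carrier_mat (d^n) (d^n)"
  shows "(\<Sum>b\<in>pauli_vecs d n. pauli_prob d n Ob b) = frob Ob / real d ^ n"
proof -
  have "(\<Sum>b\<in>pauli_vecs d n. (cmod (mtrace (Ob * pauli d b)))\<^sup>2) = real (d^n) * frob Ob"
    using parseval_pauli[OF d, of n] O unfolding parseval_def by auto
  hence "(\<Sum>b\<in>pauli_vecs d n. pauli_prob d n Ob b) = real d ^ n * frob Ob / real d ^ (2*n)"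
    unfolding pauli_prob_def by (simp add: sum_divide_distrib[symmetric])
  also have "real d ^ (2*n) = real d ^ n * real d ^ n" by (simp add: mult_2 power_add)
  finally show ?thesis using d by simp
qed

lemma norm2_frob: "norm2 d n A = sqrt (frob A / real d ^ n)"
  unfolding norm2_def frob_trace ..

lemma entropy_term:
  fixes p q :: real
  assumes p: "0 \<le> p" and q: "0 < q"
  shows "- (if p = 0 then 0 else p * ln p) \<le> q - p - p * ln q"
proof (cases "p = 0")
  case True thus ?thesis using q by simp
next
  case False
  hence pp: "0 < p" using p by simp
  have "ln (q / p) \<le> q / p - 1" by (rule ln_le_minus_one) (use pp q in simp)
  hence "p * ln (q / p) \<le> p * (q / p - 1)" using pp by (intro mult_left_mono) auto
  also have "p * (q / p - 1) = q - p" using pp by (simp add: field_simps)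
  finally have "p * (ln q - ln p) \<le> q - p" using pp q by (simp add: ln_div)
  thus ?thesis using False by (simp add: algebra_simps)
qed

lemma entropy_bound:
  fixes p :: "'x \<Rightarrow> real" and w :: "'x \<Rightarrow> nat"
  assumes fin: "finite S" and p: "\<And>x. x \<in> S \<Longrightarrow> 0 \<le> p x" and s1: "(\<Sum>x\<in>S. p x) = 1"
    and lam: "0 < lam" and Z: "(\<Sum>x\<in>S. lam ^ w x) \<le> Z"
  shows "- (\<Sum>x\<in>S. if p x = 0 then 0 else p x * log 2 (p x))
     \<le> (Z - 1 + (\<Sum>x\<in>S. real (w x) * p x) * (- ln lam)) / ln 2"
proof -
  have t: "- (if p x = 0 then 0 else p x * ln (p x)) \<le> lam ^ w x - p x + real (w x) * p x * (- ln lam)"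
    if x: "x \<in> S" for x
    using entropy_term[OF p[OF x], of "lam ^ w x"] lam by (simp add: ln_realpow algebra_simps)
  have "- (\<Sum>x\<in>S. if p x = 0 then 0 else p x * ln (p x))
      \<le> (\<Sum>x\<in>S. lam ^ w x - p x + real (w x) * p x * (- ln lam))"
    unfolding sum_negf[symmetric] by (rule sum_mono) (rule t)
  also have "\<dots> = (\<Sum>x\<in>S. lam ^ w x) - 1 + (\<Sum>x\<in>S. real (w x) * p x) * (- ln lam)"
    by (simp add: sum.distrib sum_subtractf s1 sum_distrib_right)
  also have "\<dots> \<le> Z - 1 + (\<Sum>x\<in>S. real (w x) * p x) * (- ln lam)" using Z by simp
  finally have *: "- (\<Sum>x\<in>S. if p x = 0 then 0 else p x * ln (p x)) \<le> Z - 1 + (\<Sum>x\<in>S. real (w x) * p x) * (- ln lam)" .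
  have "- (\<Sum>x\<in>S. if p x = 0 then 0 else p x * log 2 (p x)) = - (\<Sum>x\<in>S. if p x = 0 then 0 else p x * ln (p x)) / ln 2"
    unfolding sum_divide_distrib minus_divide_left[symmetric] by (intro arg_cong[where f=uminus] sum.cong refl) (simp add: log_def)
  also have "\<dots> \<le> (Z - 1 + (\<Sum>x\<in>S. real (w x) * p x) * (- ln lam)) / ln 2"
    using * by (intro divide_right_mono) auto
  finally show ?thesis .
qed

lemma card_V: "card ({0..<d} \<times> {0..<(d::nat)}) = d * d"
  by (simp add: card_cartesian_product)

lemma weight_sum:
  assumes d: "d > 0"
  shows "(\<Sum>as\<in>pauli_vecs d n. lam ^ pweight as) = (1 + (real d ^ 2 - 1) * lam) ^ n"
proof (induction n)
  case 0 thus ?case by (simp add: pauli_vecs_0 pweight_def)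
next
  case (Suc n)
  let ?V = "{0..<d} \<times> {0..<d}"
  have V0: "(0,0) \<in> ?V" using d by simp
  have "(\<Sum>a\<in>?V. lam ^ (if a = (0,0) then 0 else 1)) = 1 + (\<Sum>a\<in>?V - {(0,0)}. lam)"
    using sum.remove[OF _ V0, of "\<lambda>a. lam ^ (if a = (0,0) then 0 else 1)"] by simp
  also have "\<dots> = 1 + (real d ^ 2 - 1) * lam"
    using V0 d by (simp add: card_V power2_eq_square of_nat_diff)
  finally have V: "(\<Sum>a\<in>?V. lam ^ (if a = (0,0) then 0 else 1)) = 1 + (real d ^ 2 - 1) * lam" .
  have inj: "inj_on (\<lambda>(a,as). a # as) (?V \<times> pauli_vecs d n)" by (auto simp: inj_on_def)
  have "(\<Sum>as\<in>pauli_vecs d (Suc n). lam ^ pweight as)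
      = (\<Sum>(a,as)\<in>?V \<times> pauli_vecs d n. lam ^ pweight (a # as))"
    unfolding pauli_vecs_Suc by (subst sum.reindex[OF inj]) (simp add: comp_def split_def)
  also have "\<dots> = (\<Sum>a\<in>?V. \<Sum>as\<in>pauli_vecs d n. lam ^ (if a = (0,0) then 0 else 1) * lam ^ pweight as)"
    by (simp add: sum.cartesian_product pweight_Cons power_add split_def)
  also have "\<dots> = (\<Sum>a\<in>?V. lam ^ (if a = (0,0) then 0 else 1)) * (\<Sum>as\<in>pauli_vecs d n. lam ^ pweight as)"
    by (simp add: sum_product)
  finally show ?case using V Suc.IH by simp
qed

lemma Z_bound:
  assumes n: "n \<ge> 1" and d: "d \<ge> 1"
  shows "(1 + (real d ^ 2 - 1) * (1 / (real n * real d ^ 2))) ^ n \<le> 3"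
proof -
  let ?x = "1 + (real d ^ 2 - 1) * (1 / (real n * real d ^ 2))"
  have d2: "real d ^ 2 \<ge> 1" using d by simp
  have "(real d ^ 2 - 1) * (1 / (real n * real d ^ 2)) \<le> real d ^ 2 * (1 / (real n * real d ^ 2))"
    using n d2 by (intro mult_right_mono) auto
  also have "\<dots> = 1 / real n" using d2 d by simp
  finally have x1: "?x \<le> 1 + 1 / real n" by simp
  have x0: "0 \<le> ?x" using n d2 by simp
  have "?x ^ n \<le> exp (1 / real n) ^ n"
    using x0 x1 exp_ge_add_one_self[of "1 / real n"] by (intro power_mono) linarith+
  also have "\<dots> = exp (real n * (1 / real n))" by (rule exp_of_nat_mult[symmetric])
  also have "\<dots> = exp 1" using n by simp
  also have "\<dots> \<le> 3" by (rule exp_le)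
  finally show ?thesis .
qed

lemma ln2_half: "1/2 \<le> ln (2::real)"
proof -
  have "exp (1/2::real) ^ 2 = exp 1" by (simp add: exp_of_nat_mult[symmetric])
  also have "\<dots> \<le> 3" by (rule exp_le)
  finally have "exp (1/2::real) ^ 2 < 2 ^ 2" by simp
  hence "exp (1/2::real) < 2" by (rule power_less_imp_less_base) simp
  thus ?thesis by (subst ln_ge_iff) auto
qed

lemma pauli_prob_nonneg: "0 \<le> pauli_prob d n Ob b"
  unfolding pauli_prob_def by simp

lemma influence_le:
  assumes d: "d > 0" and O: "Ob \<in> carrier_mat (d^n) (d^n)"
  shows "0 \<le> influence d n Ob" "influence d n Ob \<le> real n * (frob Ob / real d ^ n)"
proof -
  show "0 \<le> influence d n Ob" unfolding influence_def by (intro sum_nonneg mult_nonneg_nonneg pauli_prob_nonneg) simp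
  have "influence d n Ob \<le> (\<Sum>b\<in>pauli_vecs d n. real n * pauli_prob d n Ob b)"
    unfolding influence_def
  proof (rule sum_mono)
    fix b assume "b \<in> pauli_vecs d n"
    hence "pweight b \<le> n" using pweight_le[of b] by (simp add: pauli_vecs_def)
    thus "real (pweight b) * pauli_prob d n Ob b \<le> real n * pauli_prob d n Ob b"
      by (intro mult_right_mono pauli_prob_nonneg) simp
  qed
  also have "\<dots> = real n * (frob Ob / real d ^ n)"
    by (simp add: sum_distrib_left[symmetric] sum_pauli_prob[OF d O])
  finally show "influence d n Ob \<le> real n * (frob Ob / real d ^ n)" .
qed

lemma unitary_carrier: "unitary_mat N U \<Longrightarrow> U \<in> carrier_mat N N"
  unfolding unitary_mat_def by simp

lemma conj_carrier: "unitary_mat N U \<Longrightarrow> Ob \<in> carrier_mat N N \<Longrightarrow> U * Ob * adj U \<in> carrier_mat N N"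
  using unitary_carrier[of N U] adj_carrier_mat[of U N N] by (metis mult_carrier_mat)

lemma norm2_one_frob:
  assumes d: "d > 0" and "norm2 d n Ob = 1" shows "frob Ob = real d ^ n"
proof -
  have "sqrt (frob Ob / real d ^ n) = 1" using assms(2) unfolding norm2_frob .
  hence "frob Ob / real d ^ n = 1" by (simp only: real_sqrt_eq_1_iff)
  thus ?thesis using d by (simp add: divide_eq_eq)
qed

lemma cis_bdd:
  assumes d: "d > 0" and U: "unitary_mat (d^n) U"
  shows "bdd_above ((\<lambda>Ob. \<bar>influence d n (U * Ob * adj U) - influence d n Ob\<bar>) `
          {Ob \<in> carrier_mat (d ^ n) (d ^ n). norm2 d n Ob = 1})"
proof (rule bdd_aboveI2)
  fix Ob assume "Ob \<in> {Ob \<in> carrier_mat (d ^ n) (d ^ n). norm2 d n Ob = 1}"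
  hence O: "Ob \<in> carrier_mat (d^n) (d^n)" and f: "frob Ob = real d ^ n" using norm2_one_frob[OF d] by auto
  have O': "U * Ob * adj U \<in> carrier_mat (d^n) (d^n)" by (rule conj_carrier[OF U O])
  have f': "frob (U * Ob * adj U) = real d ^ n" using frob_unitary[OF U O] f by simp
  have "influence d n Ob \<le> real n" using influence_le(2)[OF d O] f d by simp
  moreover have "influence d n (U * Ob * adj U) \<le> real n" using influence_le(2)[OF d O'] f' d by simp
  moreover note influence_le(1)[OF d O] influence_le(1)[OF d O']
  ultimately show "\<bar>influence d n (U * Ob * adj U) - influence d n Ob\<bar> \<le> 2 * real n" by linarith
qed

lemma influence_pauli_le1:
  assumes d: "d > 0" and as: "as \<in> pauli_vecs d n" and w: "pweight as = 1"
  shows "influence d n (pauli d as) \<le> 1"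
proof -
  have len: "length as = n" and sa: "set as \<subseteq> {0..<d} \<times> {0..<d}" using as by (auto simp: pauli_vecs_def)
  have P: "pauli d as \<in> carrier_mat (d^n) (d^n)" using pauli_carrier[of d as] len by simp
  have fP: "frob (pauli d as) = real d ^ n" using frob_pauli[OF sa] len by simp
  have "influence d n (pauli d as) \<le> (\<Sum>b\<in>pauli_vecs d n. pauli_prob d n (pauli d as) b)"
    unfolding influence_def
  proof (rule sum_mono)
    fix b assume b: "b \<in> pauli_vecs d n"
    show "real (pweight b) * pauli_prob d n (pauli d as) b \<le> pauli_prob d n (pauli d as) b"
    proof (cases "pweight b \<le> 1")
      case True thus ?thesis by (intro mult_left_le_one_le pauli_prob_nonneg) auto
    next
      case False
      hence "mtrace (pauli d as * pauli d b) = 0"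
        using b len w by (intro trace_pauli_zero) (auto simp: pauli_vecs_def)
      thus ?thesis by (simp add: pauli_prob_def)
    qed
  qed
  also have "\<dots> = 1" using sum_pauli_prob[OF d P] fP d by simp
  finally show ?thesis .
qed

lemma pweight_replicate: "pweight (replicate k (0,0)) = 0"
  by (induction k) (simp_all add: pweight_def)

theorem mainTheorem14:
  shows "\<exists>c::real. \<forall>d n::nat. \<forall>U. d \<ge> 2 \<longrightarrow> n \<ge> 1 \<longrightarrow> unitary_mat (d ^ n) U \<longrightarrow>
     magic_entropy d n U \<le> c * (log 2 (real n) + log 2 (real d)) * (circuit_sensitivity d n U + 1)"
proof (intro exI[of _ 6] allI impI)
  fix d n :: nat and U assume d2: "d \<ge> 2" and n1: "n \<ge> 1" and U: "unitary_mat (d ^ n) U"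
  have d: "d > 0" using d2 by simp
  define L where "L = log 2 (real n) + log 2 (real d)"
  define C where "C = circuit_sensitivity d n U"
  have logn: "0 \<le> log 2 (real n)" using n1 by simp
  have logd: "1 \<le> log 2 (real d)" using d2 by simp
  have L1: "1 \<le> L" unfolding L_def using logn logd by linarith
  define S1 where "S1 = {as \<in> pauli_vecs d n. pweight as = 1}"
  define CS where "CS = (\<lambda>Ob. \<bar>influence d n (U * Ob * adj U) - influence d n Ob\<bar>) `
          {Ob \<in> carrier_mat (d ^ n) (d ^ n). norm2 d n Ob = 1}"
  have C_def': "C = Sup CS" unfolding C_def CS_def circuit_sensitivity_def ..
  have bdd: "bdd_above CS" unfolding CS_def by (rule cis_bdd[OF d U])
  have finS1: "finite S1" unfolding S1_def using finite_pauli_vecs by simp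
  define as0 where "as0 = (1::nat,0::nat) # replicate (n - 1) (0,0)"
  have as0: "as0 \<in> S1"
  proof -
    have "length as0 = n" using n1 by (simp add: as0_def)
    moreover have "set as0 \<subseteq> {0..<d} \<times> {0..<d}" using d2 by (auto simp: as0_def)
    moreover have "pweight as0 = 1" by (simp add: as0_def pweight_Cons pweight_replicate)
    ultimately show ?thesis by (simp add: S1_def pauli_vecs_def)
  qed
  have key: "pauli_entropy d n (U * pauli d as * adj U) \<le> 4 + (C + 1) * (2 * L) \<and> 0 \<le> C"
    if as: "as \<in> S1" for as
  proof -
    have asv: "as \<in> pauli_vecs d n" and w1: "pweight as = 1" using as unfolding S1_def by auto
    have len: "length as = n" and sa: "set as \<subseteq> {0..<d} \<times> {0..<d}" using asv by (auto simp: pauli_vecs_def)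
    define P where "P = pauli d as"
    define O' where "O' = U * P * adj U"
    have P: "P \<in> carrier_mat (d^n) (d^n)" unfolding P_def using pauli_carrier[of d as] len by simp
    have fP: "frob P = real d ^ n" unfolding P_def using frob_pauli[OF sa] len by simp
    have nP: "norm2 d n P = 1" unfolding norm2_frob fP using d by simp
    have O': "O' \<in> carrier_mat (d^n) (d^n)" unfolding O'_def by (rule conj_carrier[OF U P])
    have fO': "frob O' = real d ^ n" unfolding O'_def using frob_unitary[OF U P] fP by simp
    have s1: "(\<Sum>b\<in>pauli_vecs d n. pauli_prob d n O' b) = 1" using sum_pauli_prob[OF d O'] fO' d by simp
    define I' where "I' = influence d n O'"
    have I'0: "0 \<le> I'" unfolding I'_def by (rule influence_le(1)[OF d O'])
    have inCS: "\<bar>I' - influence d n P\<bar> \<in> CS" unfolding CS_def I'_def O'_def using P nP by auto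
    have IC: "\<bar>I' - influence d n P\<bar> \<le> C" unfolding C_def' by (rule cSup_upper[OF inCS bdd])
    have IP: "influence d n P \<le> 1" unfolding P_def by (rule influence_pauli_le1[OF d asv w1])
    have C0: "0 \<le> C" using IC by linarith
    have I'C: "I' \<le> C + 1" using IC IP by linarith
    define lam where "lam = 1 / (real n * real d ^ 2)"
    have lam0: "0 < lam" unfolding lam_def using n1 d by simp
    have Z: "(\<Sum>b\<in>pauli_vecs d n. lam ^ pweight b) \<le> 3"
      unfolding weight_sum[OF d] lam_def using Z_bound[OF n1] d by simp
    have H: "pauli_entropy d n O' \<le> (3 - 1 + I' * (- ln lam)) / ln 2"
      unfolding pauli_entropy_def Let_def I'_def influence_def
      by (rule entropy_bound[OF finite_pauli_vecs pauli_prob_nonneg s1 lam0 Z])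
    have lnlam: "- ln lam = ln (real n) + 2 * ln (real d)"
      unfolding lam_def using n1 d by (simp add: ln_div ln_mult ln_realpow)
    have ln2: "1/2 \<le> ln (2::real)" by (rule ln2_half)
    have X: "(ln (real n) + 2 * ln (real d)) / ln 2 = log 2 (real n) + 2 * log 2 (real d)"
      unfolding log_def by (simp add: add_divide_distrib)
    have "(3 - 1 + I' * (- ln lam)) / ln 2 = 2 / ln 2 + I' * ((- ln lam) / ln 2)"
      by (simp only: add_divide_distrib times_divide_eq_right) simp
    also have "\<dots> = 2 / ln 2 + I' * (log 2 (real n) + 2 * log 2 (real d))" unfolding lnlam X ..
    also have "2 / ln 2 \<le> (4::real)" using ln2 by (simp add: pos_divide_le_eq)
    also have "I' * (log 2 (real n) + 2 * log 2 (real d)) \<le> (C + 1) * (2 * L)"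
    proof -
      have "I' * (log 2 (real n) + 2 * log 2 (real d)) \<le> I' * (2 * L)"
        unfolding L_def using logn I'0 by (intro mult_left_mono) auto
      also have "\<dots> \<le> (C + 1) * (2 * L)" using I'C L1 by (intro mult_right_mono) auto
      finally show ?thesis .
    qed
    finally have "pauli_entropy d n O' \<le> 4 + (C + 1) * (2 * L)" using H by simp
    thus ?thesis using C0 unfolding O'_def P_def by simp
  qed
  have C0: "0 \<le> C" using key[OF as0] by simp
  have "magic_entropy d n U \<le> 4 + (C + 1) * (2 * L)"
    unfolding magic_entropy_def S1_def[symmetric]
    using finS1 as0 key by (subst Max_le_iff) auto
  also have "\<dots> \<le> 6 * L * (C + 1)"
  proof -
    have "1 * 1 \<le> L * (C + 1)" using L1 C0 by (intro mult_mono) auto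
    moreover have "(C + 1) * (2 * L) = 2 * (L * (C + 1))" "6 * L * (C + 1) = 6 * (L * (C + 1))" by (simp_all add: algebra_simps)
    ultimately show ?thesis by linarith
  qed
  finally show "magic_entropy d n U \<le> 6 * (log 2 (real n) + log 2 (real d)) * (circuit_sensitivity d n U + 1)"
    unfolding L_def C_def .
qed

end
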